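(* The diagonals and columns of $F$ are periodic: for every integer $a\ge 0$ and every integer $n>a$, $F_{n+2a+1,\,n+a+1}=F_{n,n-a}$ (the $a$-th subdiagonal $(F_{n,n-a})_{n>a}$ has period $2a+1$); and for every integer $a\ge 1$ and every integer $n\ge a$, $F_{n+a,a}=F_{n,a}$ (the $a$-th column $(F_{n,a})_{n\ge a}$ has period $a$).
   Context: Define maps $G,S:\mathbb Z^2\to\mathbb Z^2$ by $G(x,y)=(x+y,y)$ and $S(x,y)=(3x-2y+1,\,2x-y+1)$. Define the array $(F_{n,k})_{n,k\ge 0}$ by $F_{0,0}=1$ and, for $(n,k)\neq(0,0)$, $F_{n,k}$ is the number of finite words $w=w_1w_2\cdots w_m$ ($m\ge 0$) over the alphabet $\{G,S\}$ with $w_1\circ w_2\circ\cdots\circ w_m(1,1)=(n,k)$ (the empty word acts as the identity). Equivalently: start with all entries $0$, set $F_{0,0}=1$ and $F_{1,1}=1$, and thereafter, whenever an entry $F_{n,k}$ with $n\ge 1$ changes its value, increase $F_{n+k,k}$ and $F_{3n+1-2k,\,2n+1-k}$ by $1$. *)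

theory Defs
  imports Main
begin

datatype letter = LG | LS

fun act :: "letter \<Rightarrow> int \<times> int \<Rightarrow> int \<times> int" where
  "act LG (x, y) = (x + y, y)"
| "act LS (x, y) = (3*x - 2*y + 1, 2*x - y + 1)"

definition word_act :: "letter list \<Rightarrow> int \<times> int \<Rightarrow> int \<times> int" where
  "word_act w p = foldr act w p"

definition F :: "nat \<Rightarrow> nat \<Rightarrow> nat" where
  "F n k = (if n = 0 \<and> k = 0 then 1
            else card {w. word_act w (1, 1) = (int n, int k)})"

end

theory Submission
  imports Defs
begin

lemma wa_cons[simp]: "word_act (c # w) p = act c (word_act w p)"
  by (simp add: word_act_def)

lemma wa_nil[simp]: "word_act [] p = p"
  by (simp add: word_act_def)

lemma reach_inv: "word_act w (1,1) = (x,y) \<Longrightarrow> y \<le> x \<and> 1 \<le> y"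
proof (induction w arbitrary: x y)
  case Nil then show ?case by simp
next
  case (Cons c w)
  obtain u v where uv: "word_act w (1,1) = (u,v)" by (cases "word_act w (1,1)")
  from Cons.IH[OF uv] have "v \<le> u \<and> 1 \<le> v" .
  with Cons.prems uv show ?case by (cases c) auto
qed

lemma setS:
  assumes "k \<le> n" "1 \<le> n"
  shows "{w. word_act w (1,1) = act LS (int n, int k)} = Cons LS ` {w. word_act w (1,1) = (int n, int k)}"
proof
  show "Cons LS ` {w. word_act w (1,1) = (int n, int k)} \<subseteq> {w. word_act w (1,1) = act LS (int n, int k)}"
    by auto
next
  show "{w. word_act w (1,1) = act LS (int n, int k)} \<subseteq> Cons LS ` {w. word_act w (1,1) = (int n, int k)}"
  proof
    fix w assume "w \<in> {w. word_act w (1,1) = act LS (int n, int k)}"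
    hence h: "word_act w (1,1) = act LS (int n, int k)" by simp
    show "w \<in> Cons LS ` {w. word_act w (1,1) = (int n, int k)}"
    proof (cases w)
      case Nil then show ?thesis using h assms by simp
    next
      case (Cons c w')
      obtain u v where uv: "word_act w' (1,1) = (u,v)" by (cases "word_act w' (1,1)")
      from reach_inv[OF uv] have i: "v \<le> u \<and> 1 \<le> v" .
      show ?thesis
      proof (cases c)
        case LG then show ?thesis using h Cons uv i assms by auto
      next
        case LS
        with h Cons uv have "u = int n" "v = int k" by auto
        then show ?thesis using Cons LS uv by auto
      qed
    qed
  qed
qed

lemma setG:
  assumes "a \<le> n" "1 \<le> a"
  shows "{w. word_act w (1,1) = act LG (int n, int a)} = Cons LG ` {w. word_act w (1,1) = (int n, int a)}"
proof
  show "Cons LG ` {w. word_act w (1,1) = (int n, int a)} \<subseteq> {w. word_act w (1,1) = act LG (int n, int a)}"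
    by auto
next
  show "{w. word_act w (1,1) = act LG (int n, int a)} \<subseteq> Cons LG ` {w. word_act w (1,1) = (int n, int a)}"
  proof
    fix w assume "w \<in> {w. word_act w (1,1) = act LG (int n, int a)}"
    hence h: "word_act w (1,1) = act LG (int n, int a)" by simp
    show "w \<in> Cons LG ` {w. word_act w (1,1) = (int n, int a)}"
    proof (cases w)
      case Nil then show ?thesis using h assms by simp
    next
      case (Cons c w')
      obtain u v where uv: "word_act w' (1,1) = (u,v)" by (cases "word_act w' (1,1)")
      from reach_inv[OF uv] have i: "v \<le> u \<and> 1 \<le> v" .
      show ?thesis
      proof (cases c)
        case LS then show ?thesis using h Cons uv i assms by auto
      next
        case LG
        with h Cons uv have "u = int n" "v = int a" by auto
        then show ?thesis using Cons LG uv by auto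
      qed
    qed
  qed
qed

theorem theorem13:
  shows "(\<forall>a n::nat. a < n \<longrightarrow> F (n + 2*a + 1) (n + a + 1) = F n (n - a))
       \<and> (\<forall>a n::nat. 1 \<le> a \<and> a \<le> n \<longrightarrow> F (n + a) a = F n a)"
proof (intro conjI allI impI)
  fix a n :: nat assume an: "a < n"
  have e: "act LS (int n, int (n - a)) = (int (n + 2*a + 1), int (n + a + 1))"
    using an by auto
  have "F (n + 2*a + 1) (n + a + 1) = card {w. word_act w (1,1) = act LS (int n, int (n - a))}"
    unfolding F_def e by simp
  also have "\<dots> = card (Cons LS ` {w. word_act w (1,1) = (int n, int (n - a))})"
    using setS[of "n - a" n] an by simp
  also have "\<dots> = card {w. word_act w (1,1) = (int n, int (n - a))}"
    by (rule card_image) (simp add: inj_on_def)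
  also have "\<dots> = F n (n - a)" unfolding F_def using an by simp
  finally show "F (n + 2*a + 1) (n + a + 1) = F n (n - a)" .
next
  fix a n :: nat assume an: "1 \<le> a \<and> a \<le> n"
  have e: "act LG (int n, int a) = (int (n + a), int a)" by simp
  have "F (n + a) a = card {w. word_act w (1,1) = act LG (int n, int a)}"
    unfolding F_def e using an by simp
  also have "\<dots> = card (Cons LG ` {w. word_act w (1,1) = (int n, int a)})"
    using setG[of a n] an by simp
  also have "\<dots> = card {w. word_act w (1,1) = (int n, int a)}"
    by (rule card_image) (simp add: inj_on_def)
  also have "\<dots> = F n a" unfolding F_def using an by simp
  finally show "F (n + a) a = F n a" .
qed

end
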